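(* Let $\mathcal{H}$ be a tree-to-tree Hennie machine (THM) with input ranked alphabet $\Sigma$ and output ranked alphabet $\Gamma$. Then $[\![\mathcal{H}]\!]$ has linear size-to-height increase: there exist constants $c,d$ such that for every $t\in T_\Sigma$ in the domain of $[\![\mathcal{H}]\!]$, $\mathrm{height}([\![\mathcal{H}]\!](t))\le c\,|t|+d$.
   Context: A ranked alphabet is a finite set $\Sigma$ with a map $\mathrm{rank}:\Sigma\to\mathbb{N}$; $\max\mathrm{rank}(\Sigma)$ is the maximal rank. A tree over $\Sigma$ is a finite ordered tree with nodes labeled in $\Sigma$ such that a node labeled $\sigma$ has exactly $\mathrm{rank}(\sigma)$ children; nodes are words over positive integers: the root is $\varepsilon$, the $i$-th child of $u$ is $ui$, and $u{\uparrow}$ denotes the parent of $u\neq\varepsilon$. $T_\Sigma$ is the set of trees over $\Sigma$; for a set $Y$ disjoint from $\Sigma$, $T_\Sigma[Y]$ is the set of trees over $\Sigma\cup Y$ where elements of $Y$ have rank $0$. $|t|$ is the number of nodes of $t$ and $\mathrm{height}(t)$ the maximal number of edges on a root-to-leaf path. An unrestricted tree-to-tree Hennie machine (uTHM) is a tuple $\mathcal{H}=(Q,M,\top,\Sigma,\Gamma,q_{init},\delta)$ where $Q$ is a finite set of states, $M$ a finite set of memory symbols, $\top\in M$, $\Sigma,\Gamma$ ranked alphabets (input/output), $q_{init}\in Q$, and $\delta:Q\times\Sigma\times M\rightharpoonup T_\Gamma[Q\times M\times D]$ is a partial function, $D=\{\uparrow\}\cup\{1,\dots,\max\mathrm{rank}(\Sigma)\}$,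 such that every leaf label $(q',m',d)$ of $\delta(q,\sigma,m)$ has $d\in\{\uparrow,1,\dots,\mathrm{rank}(\sigma)\}$. On an input $t\in T_\Sigma$, a configuration is a triple $(u,q,\mu)$ with $u$ a node of $t$, $q\in Q$, $\mu$ a map from nodes of $t$ to $M$; the initial configuration is $(\varepsilon,q_{init},\mu_\top)$ with $\mu_\top$ constantly $\top$. For a configuration $(u,q,\mu)$ and $(q',m',d)\in Q\times M\times D$, the successor is $(ud,q',\mu')$ where $\mu'(u)=m'$, $\mu'=\mu$ elsewhere, and $ud$ is the parent of $u$ if $d=\uparrow$ and the $d$-th child otherwise (undefined if that node does not exist). The step of a configuration $(u,q,\mu)$ is the tree obtained from $\delta(q,\mathrm{lab}_t(u),\mu(u))$ by replacing every leaf $(q',m',d)$ by the corresponding successor configuration (undefined if $\delta$ or a successor is undefined). Starting from the initial configuration and repeatedly replacing configuration-labeled leaves by their steps is a confluent rewriting; $[\![\mathcal{H}]\!](t)$ is the unique tree of $T_\Gamma$ so reached, if it exists, and is undefined otherwise. A branch-outputting run on $t$ is a sequence of configurations $C_0,\dots,C_n$ with $C_0$ initial and each $C_{i+1}$ a leaf label of the step of $C_i$. Its number of visits at a set $S$ of nodes is the number of $i$ such that the position of $C_i$ lies in $S$. $\mathcal{H}$ is a tree-to-tree Hennie machine (THM) if there is $N$ such that for every $t\in T_\Sigma$, every node $u$ of $t$ and every branch-outputting run on $t$, the number of visits at $\{u\}$ is at most $N$. *)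

theory Defs
  imports Main
begin

(* Finite ordered ranked trees; a node is a list of positive integers (1-based child indices). *)
datatype 'a rtree = Node 'a "'a rtree list"

fun root_label :: "'a rtree \<Rightarrow> 'a" where
  "root_label (Node a ts) = a"

fun children :: "'a rtree \<Rightarrow> 'a rtree list" where
  "children (Node a ts) = ts"

fun subtree :: "'a rtree \<Rightarrow> nat list \<Rightarrow> 'a rtree option" where
  "subtree t [] = Some t"
| "subtree (Node a ts) (i # u) =
     (if 1 \<le> i \<and> i \<le> length ts then subtree (ts ! (i - 1)) u else None)"

definition positions :: "'a rtree \<Rightarrow> nat list set" where
  "positions t = {u. subtree t u \<noteq> None}"

definition lab :: "'a rtree \<Rightarrow> nat list \<Rightarrow> 'a" where
  "lab t u = root_label (the (subtree t u))"

fun tsize :: "'a rtree \<Rightarrow> nat" where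
  "tsize (Node a ts) = 1 + sum_list (map tsize ts)"

fun height :: "'a rtree \<Rightarrow> nat" where
  "height (Node a ts) = (if ts = [] then 0 else Suc (Max (set (map height ts))))"

fun wf_tree :: "('a \<Rightarrow> nat) \<Rightarrow> 'a set \<Rightarrow> 'a rtree \<Rightarrow> bool" where
  "wf_tree rk A (Node a ts) = (a \<in> A \<and> length ts = rk a \<and> (\<forall>s\<in>set ts. wf_tree rk A s))"

datatype dir = Up | Down nat

(* a (u)THM  (Q, M, top, Sigma, Gamma, q_init, delta); ranked alphabets given by carrier + rank *)
record ('q, 'm, 's, 'g) hennie =
  Qs :: "'q set"
  Ms :: "'m set"
  topm :: 'm
  Sig :: "'s set"
  rkS :: "'s \<Rightarrow> nat"
  Gam :: "'g set"
  rkG :: "'g \<Rightarrow> nat"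
  qinit :: 'q
  delta :: "'q \<Rightarrow> 's \<Rightarrow> 'm \<Rightarrow> ('g + ('q \<times> 'm \<times> dir)) rtree option"

(* ranks in T_Gamma[Q x M x D]: elements of Q x M x D have rank 0 *)
definition rk_ext :: "('g \<Rightarrow> nat) \<Rightarrow> ('g + 'x) \<Rightarrow> nat" where
  "rk_ext rk x = (case x of Inl g \<Rightarrow> rk g | Inr _ \<Rightarrow> 0)"

fun labels :: "'a rtree \<Rightarrow> 'a set" where
  "labels (Node a ts) = insert a (\<Union>s\<in>set ts. labels s)"

definition maxrank :: "('s \<Rightarrow> nat) \<Rightarrow> 's set \<Rightarrow> nat" where
  "maxrank rk A = Max (rk ` A)"

definition dir_ok :: "nat \<Rightarrow> dir \<Rightarrow> bool" where
  "dir_ok r d = (case d of Up \<Rightarrow> True | Down k \<Rightarrow> 1 \<le> k \<and> k \<le> r)"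

definition uTHM :: "('q, 'm, 's, 'g, 'z) hennie_scheme \<Rightarrow> bool" where
  "uTHM H \<longleftrightarrow> finite (Qs H) \<and> finite (Ms H) \<and> topm H \<in> Ms H
     \<and> finite (Sig H) \<and> finite (Gam H) \<and> qinit H \<in> Qs H
     \<and> (\<forall>q \<sigma> m s. delta H q \<sigma> m = Some s \<longrightarrow>
          q \<in> Qs H \<and> \<sigma> \<in> Sig H \<and> m \<in> Ms H
          \<and> wf_tree (rk_ext (rkG H)) (Inl ` Gam H \<union> Inr ` (Qs H \<times> Ms H \<times> {Up} \<union> Qs H \<times> Ms H \<times> Down ` {1..maxrank (rkS H) (Sig H)})) s
          \<and> (\<forall>q' m' d. Inr (q', m', d) \<in> labels s \<longrightarrow> dir_ok (rkS H \<sigma>) d))"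

type_synonym ('q, 'm) conf = "nat list \<times> 'q \<times> (nat list \<Rightarrow> 'm)"

definition init_conf :: "('q, 'm, 's, 'g, 'z) hennie_scheme \<Rightarrow> ('q, 'm) conf" where
  "init_conf H = ([], qinit H, (\<lambda>_. topm H))"

fun succ_conf :: "'s rtree \<Rightarrow> ('q, 'm) conf \<Rightarrow> ('q \<times> 'm \<times> dir) \<Rightarrow> ('q, 'm) conf option" where
  "succ_conf t (u, q, \<mu>) (q', m', Up) =
     (if u = [] then None else Some (butlast u, q', \<mu>(u := m')))"
| "succ_conf t (u, q, \<mu>) (q', m', Down k) =
     (if u @ [k] \<in> positions t then Some (u @ [k], q', \<mu>(u := m')) else None)"

definition step :: "('q, 'm, 's, 'g, 'z) hennie_scheme \<Rightarrow> 's rtree \<Rightarrow> ('q, 'm) conf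
                     \<Rightarrow> ('g + ('q, 'm) conf) rtree option" where
  "step H t C = (case C of (u, q, \<mu>) \<Rightarrow>
     (case delta H q (lab t u) (\<mu> u) of
        None \<Rightarrow> None
      | Some s \<Rightarrow>
          (if \<forall>x. Inr x \<in> labels s \<longrightarrow> succ_conf t C x \<noteq> None
           then Some (map_rtree (map_sum id (\<lambda>x. the (succ_conf t C x))) s)
           else None)))"

(* the (finite) result of the confluent rewriting starting from a configuration / a partial tree *)
inductive evalC :: "('q, 'm, 's, 'g, 'z) hennie_scheme \<Rightarrow> 's rtree \<Rightarrow> ('q, 'm) conf \<Rightarrow> 'g rtree \<Rightarrow> bool"
  and evalT :: "('q, 'm, 's, 'g, 'z) hennie_scheme \<Rightarrow> 's rtree \<Rightarrow> ('g + ('q, 'm) conf) rtree \<Rightarrow> 'g rtree \<Rightarrow> bool"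
  for H t where
  "step H t C = Some s \<Longrightarrow> evalT H t s r \<Longrightarrow> evalC H t C r"
| "evalC H t C r \<Longrightarrow> evalT H t (Node (Inr C) []) r"
| "list_all2 (evalT H t) ss rs \<Longrightarrow> evalT H t (Node (Inl g) ss) (Node g rs)"

definition in_dom :: "('q, 'm, 's, 'g, 'z) hennie_scheme \<Rightarrow> 's rtree \<Rightarrow> bool" where
  "in_dom H t \<longleftrightarrow> (\<exists>r. evalC H t (init_conf H) r)"

definition sem :: "('q, 'm, 's, 'g, 'z) hennie_scheme \<Rightarrow> 's rtree \<Rightarrow> 'g rtree" where
  "sem H t = (THE r. evalC H t (init_conf H) r)"

definition bo_run :: "('q, 'm, 's, 'g, 'z) hennie_scheme \<Rightarrow> 's rtree \<Rightarrow> ('q, 'm) conf list \<Rightarrow> bool" where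
  "bo_run H t cs \<longleftrightarrow> cs \<noteq> [] \<and> cs ! 0 = init_conf H
     \<and> (\<forall>i. Suc i < length cs \<longrightarrow>
           (\<exists>s. step H t (cs ! i) = Some s \<and> Inr (cs ! Suc i) \<in> labels s))"

definition visits :: "('q, 'm) conf list \<Rightarrow> nat list set \<Rightarrow> nat" where
  "visits cs S = card {i. i < length cs \<and> fst (cs ! i) \<in> S}"

definition THM :: "('q, 'm, 's, 'g, 'z) hennie_scheme \<Rightarrow> bool" where
  "THM H \<longleftrightarrow> uTHM H \<and>
     (\<exists>N. \<forall>t u cs. wf_tree (rkS H) (Sig H) t \<longrightarrow> u \<in> positions t \<longrightarrow> bo_run H t cs
            \<longrightarrow> visits cs {u} \<le> N)"

end

theory Submission
  imports Defs
begin

inductive_cases evalC_E: "evalC H t C r"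
inductive_cases evalT_InrE: "evalT H t (Node (Inr C) []) r"
inductive_cases evalT_InlE: "evalT H t (Node (Inl g) ss) r"

lemma list_all2_det:
  "list_all2 (\<lambda>x y. P x y \<and> (\<forall>y'. P x y' \<longrightarrow> y = y')) xs ys \<Longrightarrow> list_all2 P xs zs \<Longrightarrow> ys = zs"
proof (induction xs ys arbitrary: zs rule: list_all2_induct)
  case Nil
  then show ?case by simp
next
  case (Cons x xs y ys)
  then show ?case by (cases zs) auto
qed

lemma eval_det:
  "evalC H t C r \<Longrightarrow> (\<forall>r'. evalC H t C r' \<longrightarrow> r = r')"
  "evalT H t s r \<Longrightarrow> (\<forall>r'. evalT H t s r' \<longrightarrow> r = r')"
proof (induction rule: evalC_evalT.inducts)
  case (1 C s r)
  then show ?case by (metis evalC_E option.inject)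
next
  case (2 C r)
  then show ?case by (metis evalT_InrE)
next
  case (3 ss rs g)
  show ?case
  proof (intro allI impI)
    fix r' assume "evalT H t (Node (Inl g) ss) r'"
    then obtain rs' where "r' = Node g rs'" "list_all2 (evalT H t) ss rs'"
      by (metis evalT_InlE)
    with 3 list_all2_det[of "evalT H t" ss rs rs'] show "Node g rs = r'" by simp
  qed
qed

lemma height_child: "s \<in> set ts \<Longrightarrow> height s < height (Node a ts)"
  by (cases "ts = []") (auto simp: less_Suc_eq_le)

lemma height_map: "height (map_rtree f s) = height s"
proof (induction s)
  case (Node a ts)
  have "map (height \<circ> map_rtree f) ts = map height ts"
    using Node by (intro map_cong) auto
  then show ?case by simp
qed

lemma labels_map: "labels (map_rtree f s) = f ` labels s"
  by (induction s) auto

definition chain :: "('q, 'm, 's, 'g, 'z) hennie_scheme \<Rightarrow> 's rtree \<Rightarrow> ('q, 'm) conf list \<Rightarrow> bool" where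
  "chain H t cs \<longleftrightarrow> (\<forall>i. Suc i < length cs \<longrightarrow>
           (\<exists>s. step H t (cs ! i) = Some s \<and> Inr (cs ! Suc i) \<in> labels s))"

lemma chain_Cons:
  assumes "chain H t cs" "cs \<noteq> []" "step H t C = Some s" "Inr (hd cs) \<in> labels s"
  shows "chain H t (C # cs)"
  unfolding chain_def
proof (intro allI impI)
  fix i assume "Suc i < length (C # cs)"
  show "\<exists>s. step H t ((C # cs) ! i) = Some s \<and> Inr ((C # cs) ! Suc i) \<in> labels s"
  proof (cases i)
    case 0 then show ?thesis using assms by (cases cs) auto
  next
    case (Suc j) then show ?thesis using assms \<open>Suc i < length (C # cs)\<close>
      unfolding chain_def by auto
  qed
qed

lemma eval_bound:
  assumes K: "\<And>C s. step H t C = Some s \<Longrightarrow> height s \<le> K"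
  shows
  "evalC H t C r \<Longrightarrow> (\<exists>cs. cs \<noteq> [] \<and> hd cs = C \<and> chain H t cs \<and> height r \<le> K * length cs)"
  "evalT H t s r \<Longrightarrow> height r \<le> height s \<or> (\<exists>C' cs. Inr C' \<in> labels s \<and> cs \<noteq> [] \<and> hd cs = C'
      \<and> chain H t cs \<and> height r \<le> height s + K * length cs)"
proof (induction rule: evalC_evalT.inducts)
  case (1 C s r)
  have hs: "height s \<le> K" using K 1(1) .
  from 1(3) show ?case
  proof
    assume "height r \<le> height s"
    then show ?thesis using hs by (intro exI[of _ "[C]"]) (auto simp: chain_def)
  next
    assume "\<exists>C' cs. Inr C' \<in> labels s \<and> cs \<noteq> [] \<and> hd cs = C'
      \<and> chain H t cs \<and> height r \<le> height s + K * length cs"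
    then obtain C' cs where c: "Inr C' \<in> labels s" "cs \<noteq> []" "hd cs = C'"
      "chain H t cs" "height r \<le> height s + K * length cs" by blast
    have "chain H t (C # cs)" using chain_Cons[OF c(4) c(2) 1(1)] c by simp
    moreover have "height r \<le> K * length (C # cs)" using c(5) hs by simp
    ultimately show ?thesis by (intro exI[of _ "C # cs"]) auto
  qed
next
  case (2 C r)
  then obtain cs where "cs \<noteq> [] \<and> hd cs = C \<and> chain H t cs \<and> height r \<le> K * length cs" by blast
  then show ?case by (intro disjI2 exI[of _ C] exI[of _ cs]) auto
next
  case (3 ss rs g)
  show ?case
  proof (cases "rs = []")
    case True then show ?thesis by simp
  next
    case False
    have "Max (set (map height rs)) \<in> set (map height rs)"
      using False by (intro Max_in) auto
    then obtain ri where ri0: "ri \<in> set rs" "Max (set (map height rs)) = height ri"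
      by (metis imageE set_map)
    then have ri: "ri \<in> set rs" "height (Node g rs) = Suc (height ri)"
      using False by simp_all
    from ri(1) obtain j where j: "j < length rs" "rs ! j = ri" by (meson in_set_conv_nth)
    have len: "length ss = length rs" using 3 by (simp add: list_all2_lengthD)
    define si where "si = ss ! j"
    have si1: "si \<in> set ss" using j len si_def by simp
    have "list_all2 (\<lambda>s r. evalT H t s r \<and> (height r \<le> height s \<or> (\<exists>C' cs. Inr C' \<in> labels s \<and> cs \<noteq> [] \<and> hd cs = C'
      \<and> chain H t cs \<and> height r \<le> height s + K * length cs))) ss rs" using 3 .
    then have si2: "height ri \<le> height si \<or> (\<exists>C' cs. Inr C' \<in> labels si \<and> cs \<noteq> [] \<and> hd cs = C'
      \<and> chain H t cs \<and> height ri \<le> height si + K * length cs)"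
      using j len unfolding si_def list_all2_conv_all_nth
      by (metis (no_types, lifting))
    note si = si1 si2
    have hlt: "height si < height (Node (Inl g) ss)" using height_child[OF si(1)] .
    have lsub: "labels si \<subseteq> labels (Node (Inl g) ss)" using si(1) by auto
    from si(2) show ?thesis
    proof
      assume "height ri \<le> height si" then show ?thesis using ri hlt by simp
    next
      assume "\<exists>C' cs. Inr C' \<in> labels si \<and> cs \<noteq> [] \<and> hd cs = C'
        \<and> chain H t cs \<and> height ri \<le> height si + K * length cs"
      then obtain C' cs where "Inr C' \<in> labels si" "cs \<noteq> []" "hd cs = C'"
        "chain H t cs" "height ri \<le> height si + K * length cs" by blast
      then show ?thesis using ri hlt lsub
        by (intro disjI2 exI[of _ C'] exI[of _ cs]) auto
    qed
  qed
qed

lemma subtree_prefix: "subtree t (u @ v) \<noteq> None \<Longrightarrow> subtree t u \<noteq> None"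
proof (induction u arbitrary: t)
  case Nil then show ?case by simp
next
  case (Cons i u)
  then show ?case by (cases t) (auto split: if_splits)
qed

lemma succ_pos:
  assumes "succ_conf t (u, q, \<mu>) x = Some C'" "u \<in> positions t"
  shows "fst C' \<in> positions t"
proof -
  obtain q' m' d where x: "x = (q', m', d)" by (cases x) auto
  show ?thesis
  proof (cases d)
    case Up
    then have "u \<noteq> []" "fst C' = butlast u" using assms x by (auto split: if_splits)
    then have "u = butlast u @ [last u]" by simp
    then show ?thesis using assms(2) subtree_prefix[of t "butlast u" "[last u]"]
      \<open>fst C' = butlast u\<close> unfolding positions_def by auto
  next
    case (Down k)
    then show ?thesis using assms x by (auto split: if_splits)
  qed
qed

lemma step_pos:
  assumes "fst C \<in> positions t" "step H t C = Some s" "Inr C' \<in> labels s"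
  shows "fst C' \<in> positions t"
proof -
  obtain u q \<mu> where C: "C = (u, q, \<mu>)" by (cases C) auto
  obtain s0 where d: "delta H q (lab t u) (\<mu> u) = Some s0"
    using assms(2) C unfolding step_def by (auto split: option.splits)
  have ok: "\<forall>x. Inr x \<in> labels s0 \<longrightarrow> succ_conf t C x \<noteq> None"
    and s: "s = map_rtree (map_sum id (\<lambda>x. the (succ_conf t C x))) s0"
    using assms(2) C d unfolding step_def by (auto split: if_splits)
  from assms(3) s obtain y where y: "y \<in> labels s0" "Inr C' = map_sum id (\<lambda>x. the (succ_conf t C x)) y"
    by (auto simp: labels_map)
  then obtain x where x: "y = Inr x" "C' = the (succ_conf t C x)" by (cases y) auto
  then have "succ_conf t C x = Some C'" using ok[rule_format, of x] y(1)
    by (cases "succ_conf t C x") auto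
  then show ?thesis using succ_pos assms(1) C by fastforce
qed

lemma chain_pos:
  assumes "chain H t cs" "cs \<noteq> []" "fst (cs ! 0) \<in> positions t"
  shows "\<forall>i < length cs. fst (cs ! i) \<in> positions t"
proof (intro allI impI)
  fix i assume "i < length cs"
  then show "fst (cs ! i) \<in> positions t"
  proof (induction i)
    case 0 then show ?case using assms by simp
  next
    case (Suc i)
    then obtain s where "step H t (cs ! i) = Some s" "Inr (cs ! Suc i) \<in> labels s"
      using assms(1) unfolding chain_def by blast
    then show ?case using Suc step_pos by fastforce
  qed
qed

lemma positions_Node:
  "positions (Node a ts) \<subseteq> insert [] (\<Union>i\<in>{0..<length ts}. (\<lambda>u. Suc i # u) ` positions (ts ! i))"
proof
  fix v assume v: "v \<in> positions (Node a ts)"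
  show "v \<in> insert [] (\<Union>i\<in>{0..<length ts}. (\<lambda>u. Suc i # u) ` positions (ts ! i))"
  proof (cases v)
    case Nil then show ?thesis by simp
  next
    case (Cons j w)
    then have "1 \<le> j" "j \<le> length ts" "w \<in> positions (ts ! (j - 1))"
      using v unfolding positions_def by (auto split: if_splits)
    then show ?thesis using Cons
      by (intro insertI2 UN_I[of "j - 1"]) auto
  qed
qed

lemma positions_card: "finite (positions t) \<and> card (positions t) \<le> tsize t"
proof (induction t)
  case (Node a ts)
  let ?A = "\<lambda>i. (\<lambda>u. Suc i # u) ` positions (ts ! i)"
  have fin: "\<And>i. i < length ts \<Longrightarrow> finite (positions (ts ! i)) \<and> card (positions (ts ! i)) \<le> tsize (ts ! i)"
    using Node by auto
  have finU: "finite (insert [] (\<Union>i\<in>{0..<length ts}. ?A i))" using fin by auto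
  have "card (insert [] (\<Union>i\<in>{0..<length ts}. ?A i)) \<le> Suc (card (\<Union>i\<in>{0..<length ts}. ?A i))"
    by (simp add: card_insert_le_m1)
  also have "card (\<Union>i\<in>{0..<length ts}. ?A i) \<le> (\<Sum>i\<in>{0..<length ts}. card (?A i))"
    by (rule card_UN_le) simp
  also have "\<dots> \<le> (\<Sum>i\<in>{0..<length ts}. tsize (ts ! i))"
  proof (rule sum_mono)
    fix i assume "i \<in> {0..<length ts}"
    then show "card (?A i) \<le> tsize (ts ! i)" using fin card_image_le order_trans by fastforce
  qed
  also have "\<dots> = sum_list (map tsize ts)" by (simp add: sum_list_sum_nth)
  finally have "card (insert [] (\<Union>i\<in>{0..<length ts}. ?A i)) \<le> tsize (Node a ts)" by simp
  then show ?case using positions_Node[of a ts] finU card_mono[OF finU positions_Node[of a ts]]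
    by (meson finite_subset order_trans)
qed

theorem mainTheorem1:
  fixes H :: "('q, 'm, 's, 'g) hennie"
  assumes "THM H"
  shows "\<exists>c d :: nat. \<forall>t. wf_tree (rkS H) (Sig H) t \<and> in_dom H t
            \<longrightarrow> height (sem H t) \<le> c * tsize t + d"
proof -
  have u: "uTHM H" and "\<exists>N. \<forall>t u cs. wf_tree (rkS H) (Sig H) t \<longrightarrow> u \<in> positions t \<longrightarrow> bo_run H t cs
            \<longrightarrow> visits cs {u} \<le> N" using assms unfolding THM_def by auto
  then obtain N where N: "\<And>t u cs. wf_tree (rkS H) (Sig H) t \<Longrightarrow> u \<in> positions t \<Longrightarrow> bo_run H t cs
            \<Longrightarrow> visits cs {u} \<le> N" by blast
  define D where "D = {s. \<exists>q \<sigma> m. q \<in> Qs H \<and> \<sigma> \<in> Sig H \<and> m \<in> Ms H \<and> delta H q \<sigma> m = Some s}"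
  have "D \<subseteq> (\<lambda>(q, \<sigma>, m). the (delta H q \<sigma> m)) ` (Qs H \<times> Sig H \<times> Ms H)"
    unfolding D_def by force
  moreover have "finite (Qs H \<times> Sig H \<times> Ms H)" using u unfolding uTHM_def by auto
  ultimately have finD: "finite D" by (meson finite_imageI finite_subset)
  define K where "K = Max (insert 0 (height ` D))"
  have K: "height s \<le> K" if st: "step H t C = Some s" for t C s
  proof -
    obtain u q \<mu> where C: "C = (u, q, \<mu>)" by (cases C) auto
    obtain s0 where d: "delta H q (lab t u) (\<mu> u) = Some s0"
      using st C unfolding step_def by (auto split: option.splits)
    have s: "s = map_rtree (map_sum id (\<lambda>x. the (succ_conf t C x))) s0"
      using st C d unfolding step_def by (auto split: if_splits)
    have "s0 \<in> D" using d u unfolding D_def uTHM_def by blast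
    then have "height s0 \<le> K" unfolding K_def using finD by (intro Max_ge) auto
    then show ?thesis using s height_map by metis
  qed
  show ?thesis
  proof (rule exI[of _ "K * N"], rule exI[of _ 0], intro allI impI)
    fix t assume a: "wf_tree (rkS H) (Sig H) t \<and> in_dom H t"
    then obtain r where r: "evalC H t (init_conf H) r" unfolding in_dom_def by blast
    then have sem: "sem H t = r" unfolding sem_def using eval_det(1) by (metis the_equality)
    have Kt: "\<And>C s. step H t C = Some s \<Longrightarrow> height s \<le> K" using K by blast
    have ex: "\<exists>cs. cs \<noteq> [] \<and> hd cs = init_conf H \<and> chain H t cs \<and> height r \<le> K * length cs"
      by (rule eval_bound(1)[where H=H and t=t and K=K]) (fact Kt, fact r)
    then obtain cs where cs: "cs \<noteq> []" "hd cs = init_conf H" "chain H t cs" "height r \<le> K * length cs"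
      by blast
    have bo: "bo_run H t cs" using cs unfolding bo_run_def chain_def by (simp add: hd_conv_nth)
    have p0: "fst (cs ! 0) \<in> positions t" using cs
      by (simp add: hd_conv_nth[symmetric] init_conf_def positions_def)
    have allp: "\<forall>i < length cs. fst (cs ! i) \<in> positions t" using chain_pos[OF cs(3) cs(1) p0] .
    have fp: "finite (positions t)" "card (positions t) \<le> tsize t" using positions_card by auto
    have "{i. i < length cs} = (\<Union>u\<in>positions t. {i. i < length cs \<and> fst (cs ! i) \<in> {u}})"
      using allp by auto
    then have "length cs = card (\<Union>u\<in>positions t. {i. i < length cs \<and> fst (cs ! i) \<in> {u}})"
      by (metis card_Collect_less_nat)
    also have "\<dots> \<le> (\<Sum>u\<in>positions t. card {i. i < length cs \<and> fst (cs ! i) \<in> {u}})"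
      by (rule card_UN_le[OF fp(1)])
    also have "\<dots> = (\<Sum>u\<in>positions t. visits cs {u})" unfolding visits_def ..
    also have "\<dots> \<le> (\<Sum>u\<in>positions t. N)" using N a bo by (intro sum_mono) auto
    also have "\<dots> = N * card (positions t)" by simp
    also have "\<dots> \<le> N * tsize t" using fp(2) by simp
    finally have "length cs \<le> N * tsize t" .
    then have "K * length cs \<le> K * N * tsize t" by (simp add: mult.assoc)
    then show "height (sem H t) \<le> K * N * tsize t + 0" using cs(4) sem by (metis add_0_right order_trans)
  qed
qed

end
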